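(* Let $r\ge2$ be an integer, $m,\ell$ positive integers with $r<2^m$, let $\alpha_0$ be a real number with $\alpha_0\in(-r/2,r/2]$, and let $B$ be an integer with $1\le B<B_{\max}=(2^{m+\ell}/r-1)/2$. Then $$\sum_{t=-B}^{B}P(\alpha_0+rt)\ \ge\ \frac1r\left(1-\frac{1}{\pi^2}\left(\frac{2}{B}+\frac{1}{B^2}+\frac{1}{3B^3}\right)\right)-\frac{\pi^2(2B+1)}{2^{m+\ell}}.$$
   Context: Let $\beta=2^{m+\ell}\bmod r$ and $L=\lfloor 2^{m+\ell}/r\rfloor$. For real $\alpha$ not a multiple of $2^{m+\ell}$, $$P(\alpha)=\frac{\beta}{2^{2(m+\ell)}}\cdot\frac{1-\cos(2\pi\alpha(L+1)/2^{m+\ell})}{1-\cos(2\pi\alpha/2^{m+\ell})}+\frac{r-\beta}{2^{2(m+\ell)}}\cdot\frac{1-\cos(2\pi\alpha L/2^{m+\ell})}{1-\cos(2\pi\alpha/2^{m+\ell})},$$ and $P(0)=(L^2r+(2L+1)\beta)/2^{2(m+\ell)}$. *)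

theory Defs
  imports "HOL-Analysis.Analysis"
begin

(* P(alpha) from the paper, with parameters r, m, l.  N = 2^(m+l),
   beta = N mod r, L = N div r.  At multiples of N the formula is replaced
   by its (continuous, periodic) value P(0). *)
definition Pfun :: "nat \<Rightarrow> nat \<Rightarrow> nat \<Rightarrow> real \<Rightarrow> real" where
  "Pfun r m l \<alpha> =
    (let N = (2::nat) ^ (m + l); \<beta> = N mod r; L = N div r in
     if \<alpha> / real N \<in> \<int> then
       (real L ^ 2 * real r + (2 * real L + 1) * real \<beta>) / real N ^ 2
     else
       real \<beta> / real N ^ 2 *
         ((1 - cos (2 * pi * \<alpha> * real (L + 1) / real N)) / (1 - cos (2 * pi * \<alpha> / real N)))
     + (real r - real \<beta>) / real N ^ 2 *
         ((1 - cos (2 * pi * \<alpha> * real L / real N)) / (1 - cos (2 * pi * \<alpha> / real N))))"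

end

theory Submission
  imports Defs
begin


lemma Gamma_reflection_real:
  fixes y :: real assumes "y \<notin> \<int>"
  shows "Gamma y * Gamma (1 - y) = pi / sin (pi * y)"
proof -
  have "Gamma (complex_of_real y) * Gamma (1 - complex_of_real y) = of_real pi / sin (of_real pi * of_real y)"
    by (rule Gamma_reflection_complex)
  also have "Gamma (1 - complex_of_real y) = of_real (Gamma (1 - y))"
    using Gamma_complex_of_real[of "1 - y"] by simp
  also have "sin (complex_of_real pi * of_real y) = of_real (sin (pi * y))"
    by (simp flip: sin_of_real)
  finally have "complex_of_real (Gamma y * Gamma (1 - y)) = complex_of_real (pi / sin (pi * y))"
    by (simp add: Gamma_complex_of_real)
  thus ?thesis by (simp only: of_real_eq_iff)
qed

lemma deriv_eq_on_open:
  fixes f g :: "real \<Rightarrow> real"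
  assumes "open S" "x \<in> S" "\<And>y. y \<in> S \<Longrightarrow> f y = g y"
    "(f has_real_derivative a) (at x)" "(g has_real_derivative b) (at x)"
  shows "a = b"
proof -
  have "(g has_real_derivative a) (at x)"
    using has_field_derivative_transform_within_open[OF assms(4,1,2,3)] .
  thus ?thesis using assms(5) DERIV_unique by blast
qed

lemma notInt_props:
  fixes y :: real assumes "y \<notin> \<int>"
  shows "sin (pi * y) \<noteq> 0" "y \<notin> \<int>\<^sub>\<le>\<^sub>0" "1 - y \<notin> \<int>\<^sub>\<le>\<^sub>0"
proof -
  show "sin (pi * y) \<noteq> 0"
  proof
    assume "sin (pi * y) = 0"
    then obtain i :: int where "pi * y = of_int i * pi" using sin_zero_iff_int2 by blast
    hence "y = of_int i" by simp
    thus False using assms by simp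
  qed
  show "y \<notin> \<int>\<^sub>\<le>\<^sub>0" using assms nonpos_Ints_subset_Ints by blast
  have "1 - y \<notin> \<int>"
  proof
    assume "1 - y \<in> \<int>"
    hence "1 - (1 - y) \<in> \<int>" by (intro Ints_diff) auto
    thus False using assms by simp
  qed
  thus "1 - y \<notin> \<int>\<^sub>\<le>\<^sub>0" using nonpos_Ints_subset_Ints by blast
qed

lemma Polygamma1_reflection:
  fixes x :: real assumes x: "x \<notin> \<int>"
  shows "Polygamma 1 x + Polygamma 1 (1 - x) = pi ^ 2 / sin (pi * x) ^ 2"
proof -
  define S where "S = {real_of_int \<lfloor>x\<rfloor> <..< real_of_int \<lfloor>x\<rfloor> + 1}"
  have oS: "open S" unfolding S_def by simp
  have h0: "real_of_int \<lfloor>x\<rfloor> \<noteq> x" using x by (metis Ints_of_int)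
  have h1: "real_of_int \<lfloor>x\<rfloor> \<le> x" by (rule of_int_floor_le)
  have h2: "x < real_of_int \<lfloor>x\<rfloor> + 1" by (rule real_of_int_floor_add_one_gt)
  have "real_of_int \<lfloor>x\<rfloor> < x" using h0 h1 by linarith
  hence xS: "x \<in> S" unfolding S_def using h2 by simp
  have SI: "y \<notin> \<int>" if "y \<in> S" for y
  proof
    assume "y \<in> \<int>" then obtain k where k: "y = of_int k" by (auto elim: Ints_cases)
    with that show False unfolding S_def by auto
  qed
  have dig: "Digamma y - Digamma (1 - y) = - pi * cos (pi * y) / sin (pi * y)" if yS: "y \<in> S" for y
  proof -
    note p = notInt_props[OF SI[OF yS]]
    have d1: "((\<lambda>y. Gamma y * Gamma (1 - y)) has_real_derivative
        (Gamma y * Gamma (1 - y) * (Digamma y - Digamma (1 - y)))) (at y)"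
      using p apply -
      apply (rule derivative_eq_intros refl | assumption)+
      by (simp add: algebra_simps)
    have d2: "((\<lambda>y. pi / sin (pi * y)) has_real_derivative
        (- (pi * pi * cos (pi * y)) / (sin (pi * y) * sin (pi * y)))) (at y)"
      using p apply -
      apply (rule derivative_eq_intros refl | assumption)+
      by (simp add: algebra_simps)
    have eq: "Gamma y * Gamma (1 - y) * (Digamma y - Digamma (1 - y))
        = - (pi * pi * cos (pi * y)) / (sin (pi * y) * sin (pi * y))"
      by (rule deriv_eq_on_open[OF oS yS _ d1 d2]) (use SI Gamma_reflection_real in blast)
    have g: "Gamma y * Gamma (1 - y) = pi / sin (pi * y)" using SI[OF yS] Gamma_reflection_real by blast
    have "Digamma y - Digamma (1 - y) = (sin (pi * y) / pi) * (Gamma y * Gamma (1 - y) * (Digamma y - Digamma (1 - y)))"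
      using p(1) by (simp add: g)
    also have "\<dots> = (sin (pi * y) / pi) * (- (pi * pi * cos (pi * y)) / (sin (pi * y) * sin (pi * y)))"
      by (simp only: eq)
    also have "\<dots> = - pi * cos (pi * y) / sin (pi * y)"
      using p(1) by (simp add: field_simps)
    finally show ?thesis .
  qed
  note p = notInt_props[OF x]
  have d1: "((\<lambda>y. Digamma y - Digamma (1 - y)) has_real_derivative
        (Polygamma 1 x + Polygamma 1 (1 - x))) (at x)"
    using p apply -
    apply (rule derivative_eq_intros refl | assumption)+
    by simp
  have sc: "pi * (pi * (cos (pi * x) * cos (pi * x))) + pi * (pi * (sin (pi * x) * sin (pi * x))) = pi * pi"
    by (metis distrib_left mult_1_right sin_cos_squared_add3)
  have d2: "((\<lambda>y. - pi * cos (pi * y) / sin (pi * y)) has_real_derivative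
        (pi * pi * (sin (pi * x) * sin (pi * x) + cos (pi * x) * cos (pi * x)) / (sin (pi * x) * sin (pi * x)))) (at x)"
    using p apply -
    apply (rule derivative_eq_intros refl | assumption)+
    using sc by (simp add: algebra_simps)
  have "Polygamma 1 x + Polygamma 1 (1 - x) = pi * pi * (sin (pi * x) * sin (pi * x) + cos (pi * x) * cos (pi * x)) / (sin (pi * x) * sin (pi * x))"
    by (rule deriv_eq_on_open[OF oS xS _ d1 d2]) (use dig in blast)
  also have "\<dots> = pi^2 / sin (pi * x) ^ 2"
    by (simp add: power2_eq_square[symmetric])
  finally show ?thesis .
qed



lemma tail_bound:
  fixes f :: "nat \<Rightarrow> real" and s S :: real and K :: nat
  assumes fs: "f sums S" and fb: "\<And>k. k \<ge> K \<Longrightarrow> f k \<le> 1 / (real k + s) - 1 / (real k + 1 + s)"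
    and Ks: "real K + s > 0"
  shows "S \<le> (\<Sum>k<K. f k) + 1 / (real K + s)"
proof -
  have part: "(\<Sum>k<n. f k) \<le> (\<Sum>k<K. f k) + 1 / (real K + s) - 1 / (real n + s)" if "n \<ge> K" for n
    using that
  proof (induction n rule: dec_induct)
    case base then show ?case by simp
  next
    case (step n)
    have "(\<Sum>k<Suc n. f k) = (\<Sum>k<n. f k) + f n" by simp
    also have "\<dots> \<le> (\<Sum>k<K. f k) + 1 / (real K + s) - 1 / (real n + s) + (1 / (real n + s) - 1 / (real n + 1 + s))"
      using step.IH fb[OF step.hyps(1)] by linarith
    finally show ?case by (simp add: add_ac)
  qed
  have "(\<lambda>n. \<Sum>k<n. f k) \<longlonglongrightarrow> S" using fs by (simp add: sums_def)
  moreover have "\<exists>N. \<forall>n\<ge>N. (\<Sum>k<n. f k) \<le> (\<Sum>k<K. f k) + 1 / (real K + s)"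
  proof (intro exI allI impI)
    fix n assume n: "n \<ge> K"
    have "real n + s > 0" using n Ks by linarith
    hence "1 / (real n + s) > 0" by simp
    thus "(\<Sum>k<n. f k) \<le> (\<Sum>k<K. f k) + 1 / (real K + s)" using part[OF n] by linarith
  qed
  ultimately show ?thesis by (rule LIMSEQ_le_const2)
qed

lemma inv_sq_bound:
  fixes c y :: real assumes c: "c > 0" and y: "y \<ge> c + 1/2"
  shows "inverse (y ^ 2) \<le> 1 / c - 1 / (c + 1)"
proof -
  have "c * (c + 1) \<le> (c + 1/2)^2" by (simp add: power2_eq_square algebra_simps)
  also have "\<dots> \<le> y ^ 2" using y c by (intro power_mono) auto
  finally have h: "c * (c + 1) \<le> y ^ 2" .
  have pos: "c * (c + 1) > 0" using c by simp
  have "inverse (y ^ 2) \<le> inverse (c * (c + 1))" using h pos by (rule le_imp_inverse_le)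
  also have "inverse (c * (c + 1)) = 1 / c - 1 / (c + 1)" using c by (simp add: field_simps)
  finally show ?thesis .
qed

lemma sum_sym_split:
  fixes f :: "int \<Rightarrow> real"
  shows "(\<Sum>t = - int b..int b. f t) = (\<Sum>k<Suc b. f (int k)) + (\<Sum>k<b. f (- int k - 1))"
proof (induction b)
  case 0 then show ?case by simp
next
  case (Suc b)
  have "{- int (Suc b)..int (Suc b)} = insert (- int b - 1) (insert (int b + 1) {- int b..int b})"
    by auto
  hence "(\<Sum>t = - int (Suc b)..int (Suc b). f t) = f (- int b - 1) + (f (int b + 1) + (\<Sum>t = - int b..int b. f t))"
    by (simp add: sum.insert)
  then show ?case using Suc.IH by (simp add: add_ac)
qed


lemma series_lower:
  fixes u :: real and b :: nat
  assumes u1: "-1/2 < u" and u2: "u \<le> 1/2" and u0: "u \<noteq> 0" and b: "b \<ge> 1"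
  shows "(\<Sum>t = - int b..int b. 1 / (u + real_of_int t)^2) \<ge> pi^2 / sin (pi * u)^2 - 2 / real b"
proof -
  have uI: "u \<notin> \<int>"
  proof
    assume "u \<in> \<int>" then obtain k where k: "u = of_int k" by (auto elim: Ints_cases)
    with u1 u2 have "-1 < 2 * k" "2 * k \<le> 1" by linarith+
    hence "k = 0" by linarith
    with k u0 show False by simp
  qed
  have s1: "(\<lambda>k. inverse ((u + of_nat k)^2)) sums Polygamma 1 u"
    using Polygamma_LIMSEQ[of u 1] u0 by (simp add: numeral_2_eq_2)
  have u0': "1 - u \<noteq> 0" using u2 by simp
  have s2: "(\<lambda>k. inverse ((1 - u + of_nat k)^2)) sums Polygamma 1 (1 - u)"
    using Polygamma_LIMSEQ[of "1 - u" 1] u0' by (simp add: numeral_2_eq_2)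
  have T1: "Polygamma 1 u \<le> (\<Sum>k<Suc b. inverse ((u + of_nat k)^2)) + 1 / (real (Suc b) + (-1))"
  proof (rule tail_bound[OF s1])
    fix k assume k: "Suc b \<le> k"
    have "inverse ((u + of_nat k)^2) \<le> 1 / (real k - 1) - 1 / (real k - 1 + 1)"
      using k b u1 by (intro inv_sq_bound) auto
    thus "inverse ((u + of_nat k)^2) \<le> 1 / (real k + (-1)) - 1 / (real k + 1 + (-1))" by simp
  qed (use b in simp)
  have T2: "Polygamma 1 (1 - u) \<le> (\<Sum>k<b. inverse ((1 - u + of_nat k)^2)) + 1 / (real b + 0)"
  proof (rule tail_bound[OF s2])
    fix k assume k: "b \<le> k"
    have "inverse ((1 - u + of_nat k)^2) \<le> 1 / (real k) - 1 / (real k + 1)"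
      using k b u2 by (intro inv_sq_bound) auto
    thus "inverse ((1 - u + of_nat k)^2) \<le> 1 / (real k + 0) - 1 / (real k + 1 + 0)" by simp
  qed (use b in simp)
  have split: "(\<Sum>t = - int b..int b. 1 / (u + real_of_int t)^2)
      = (\<Sum>k<Suc b. inverse ((u + of_nat k)^2)) + (\<Sum>k<b. inverse ((1 - u + of_nat k)^2))"
  proof -
    have "(\<Sum>t = - int b..int b. 1 / (u + real_of_int t)^2)
       = (\<Sum>k<Suc b. 1 / (u + real_of_int (int k))^2) + (\<Sum>k<b. 1 / (u + real_of_int (- int k - 1))^2)"
      by (rule sum_sym_split)
    also have "(\<Sum>k<Suc b. 1 / (u + real_of_int (int k))^2) = (\<Sum>k<Suc b. inverse ((u + of_nat k)^2))"
      by (simp add: inverse_eq_divide)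
    also have "(\<Sum>k<b. 1 / (u + real_of_int (- int k - 1))^2) = (\<Sum>k<b. inverse ((1 - u + of_nat k)^2))"
    proof (rule sum.cong[OF refl])
      fix k assume "k \<in> {..<b}"
      have "u + real_of_int (- int k - 1) = - (1 - u + of_nat k)" by simp
      hence "(u + real_of_int (- int k - 1))^2 = (1 - u + of_nat k)^2" by (simp only: power2_minus)
      thus "1 / (u + real_of_int (- int k - 1))^2 = inverse ((1 - u + of_nat k)^2)"
        by (simp add: inverse_eq_divide)
    qed
    finally show ?thesis .
  qed
  have "pi^2 / sin (pi * u)^2 = Polygamma 1 u + Polygamma 1 (1 - u)"
    using Polygamma1_reflection[OF uI] by simp
  also have "\<dots> \<le> (\<Sum>k<Suc b. inverse ((u + of_nat k)^2)) + (\<Sum>k<b. inverse ((1 - u + of_nat k)^2)) + 2 / real b"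
    using T1 T2 by simp
  finally show ?thesis using split by linarith
qed

lemma sin_minus_x_cube: fixes x :: real shows "\<bar>sin x - x\<bar> \<le> \<bar>x\<bar>^3 / 6"
proof -
  have "\<bar>sin x - (\<Sum>m<3. sin_coeff m * x ^ m)\<bar> \<le> inverse (fact 3) * \<bar>x\<bar> ^ 3"
    by (rule Maclaurin_sin_bound)
  moreover have "(\<Sum>m<3. sin_coeff m * x ^ m) = x"
    by (simp add: eval_nat_numeral lessThan_Suc sin_coeff_def)
  moreover have "inverse (fact 3 :: real) = 1/6" by (simp add: eval_nat_numeral)
  ultimately show ?thesis by simp
qed

lemma sin_sq_second_order:
  fixes a d :: real assumes d: "\<bar>d\<bar> \<le> 2"
  shows "\<bar>sin (a + d)^2 - sin a ^2 - 2 * d * sin a * cos a\<bar> \<le> 3 * d^2"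
proof -
  define sA cA sD cD where "sA = sin a" "cA = cos a" "sD = sin d" "cD = cos d"
  have pa: "sA^2 + cA^2 = 1" and pd: "sD^2 + cD^2 = 1" unfolding sA_cA_sD_cD_def by simp_all
  have eq: "sin (a + d)^2 - sin a ^2 - 2 * d * sin a * cos a
      = (cA^2 - sA^2) * sD^2 + 2 * sA * cA * (sD * cD - d)"
  proof -
    have "sin (a + d)^2 - sin a ^2 - 2 * d * sin a * cos a = (sA * cD + cA * sD)^2 - sA^2 - 2 * d * sA * cA"
      unfolding sA_cA_sD_cD_def by (simp add: sin_add)
    also have "\<dots> = sA^2 * cD^2 + 2 * sA * cD * cA * sD + cA^2 * sD^2 - sA^2 - 2 * d * sA * cA"
      by (simp add: power2_eq_square algebra_simps)
    also have "\<dots> = sA^2 * (1 - sD^2) + 2 * sA * cD * cA * sD + cA^2 * sD^2 - sA^2 - 2 * d * sA * cA"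
      using pd by (simp add: eq_diff_eq[symmetric])
    also have "\<dots> = (cA^2 - sA^2) * sD^2 + 2 * sA * cA * (sD * cD - d)"
      by (simp add: power2_eq_square algebra_simps)
    finally show ?thesis .
  qed
  have b1: "\<bar>cA^2 - sA^2\<bar> \<le> 1"
  proof -
    have "0 \<le> cA^2" "0 \<le> sA^2" by simp_all
    thus ?thesis using pa by linarith
  qed
  have b2: "sD^2 \<le> d^2" unfolding sA_cA_sD_cD_def
    using abs_sin_x_le_abs_x[of d] by (metis abs_ge_zero power2_le_iff_abs_le power2_abs)
  have b3: "\<bar>2 * sA * cA\<bar> \<le> 1" unfolding sA_cA_sD_cD_def
    using abs_sin_le_one[of "2*a"] by (simp add: sin_double mult.assoc)
  have b4: "\<bar>sD * cD - d\<bar> \<le> (2/3) * \<bar>d\<bar>^3"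
  proof -
    have "sD * cD - d = (sin (2 * d) - 2 * d) / 2" unfolding sA_cA_sD_cD_def by (simp add: sin_double)
    hence "\<bar>sD * cD - d\<bar> = \<bar>(sin (2 * d) - 2 * d) / 2\<bar>" by (rule arg_cong)
    also have "\<dots> = \<bar>sin (2 * d) - 2 * d\<bar> / 2" by simp
    also have "\<dots> \<le> (\<bar>2 * d\<bar>^3 / 6) / 2" using sin_minus_x_cube[of "2*d"] by simp
    also have "\<dots> = (2/3) * \<bar>d\<bar>^3" by (simp add: power_mult_distrib abs_mult)
    finally show ?thesis .
  qed
  have b5: "\<bar>d\<bar>^3 \<le> 2 * d^2"
  proof -
    have "\<bar>d\<bar>^3 = \<bar>d\<bar> * d^2" by (simp add: power3_eq_cube power2_eq_square abs_mult)
    also have "\<dots> \<le> 2 * d^2" using d by (intro mult_right_mono) auto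
    finally show ?thesis .
  qed
  have "\<bar>(cA^2 - sA^2) * sD^2\<bar> \<le> 1 * d^2"
    unfolding abs_mult using b1 b2 by (intro mult_mono) auto
  moreover have "\<bar>2 * sA * cA * (sD * cD - d)\<bar> \<le> 1 * ((2/3) * \<bar>d\<bar>^3)"
    unfolding abs_mult[of "2 * sA * cA"] using b3 b4 by (intro mult_mono) auto
  ultimately have "\<bar>(cA^2 - sA^2) * sD^2 + 2 * sA * cA * (sD * cD - d)\<bar> \<le> d^2 + (2/3) * \<bar>d\<bar>^3"
    by linarith
  thus ?thesis using eq b5 by linarith
qed


lemma perterm:
  fixes r m l :: nat and \<alpha> :: real
  assumes r: "r \<ge> 1" and rN: "r \<le> 2^(m+l)" and a0: "\<alpha> \<noteq> 0"
    and aN: "\<bar>\<alpha>\<bar> < real (2^(m+l)) / 2"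
  shows "Pfun r m l \<alpha> \<ge> real r * sin (pi * \<alpha> / real r)^2 / (pi^2 * \<alpha>^2) - 3 / real ((2::nat)^(m+l))"
proof -
  define N where "N = (2::nat)^(m+l)"
  define L where "L = N div r"
  define bt where "bt = N mod r"
  have Neq: "real N = real L * real r + real bt"
    unfolding L_def bt_def by (metis div_mult_mod_eq of_nat_add of_nat_mult)
  have btr: "bt < r" unfolding bt_def using r by simp
  have Npos: "real N > 0" unfolding N_def by simp
  have rNr: "real r \<le> real N" using rN unfolding N_def by simp
  have rpos: "real r > 0" using r by simp
  have aN': "\<bar>\<alpha>\<bar> < real N / 2" using aN unfolding N_def by simp
  have nint: "\<not> (\<alpha> / real N \<in> \<int>)"
  proof
    assume "\<alpha> / real N \<in> \<int>" then obtain k where k: "\<alpha> / real N = of_int k" by (auto elim: Ints_cases)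
    have "\<bar>\<alpha> / real N\<bar> < 1/2" using aN' Npos by (simp add: abs_divide field_simps)
    hence "\<bar>real_of_int k\<bar> < 1/2" using k by simp
    hence "k = 0" by linarith
    thus False using k a0 Npos by simp
  qed
  define \<phi> where "\<phi> = pi * \<alpha> / real N"
  have P: "Pfun r m l \<alpha> = real bt / real N ^ 2 *
         ((1 - cos (2 * pi * \<alpha> * real (L + 1) / real N)) / (1 - cos (2 * pi * \<alpha> / real N)))
     + (real r - real bt) / real N ^ 2 *
         ((1 - cos (2 * pi * \<alpha> * real L / real N)) / (1 - cos (2 * pi * \<alpha> / real N)))"
    unfolding Pfun_def Let_def N_def[symmetric] L_def[symmetric] bt_def[symmetric]
    by (simp only: if_not_P[OF nint])
  have c1: "1 - cos (2 * pi * \<alpha> * real (L + 1) / real N) = 2 * sin ((real L + 1) * \<phi>)^2"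
  proof -
    have "2 * pi * \<alpha> * real (L + 1) / real N = 2 * ((real L + 1) * \<phi>)" unfolding \<phi>_def by simp
    thus ?thesis by (simp add: cos_double_sin)
  qed
  have c0: "1 - cos (2 * pi * \<alpha> * real L / real N) = 2 * sin (real L * \<phi>)^2"
  proof -
    have "2 * pi * \<alpha> * real L / real N = 2 * (real L * \<phi>)" unfolding \<phi>_def by simp
    thus ?thesis by (simp add: cos_double_sin)
  qed
  have c: "1 - cos (2 * pi * \<alpha> / real N) = 2 * sin \<phi>^2"
  proof -
    have "2 * pi * \<alpha> / real N = 2 * \<phi>" unfolding \<phi>_def by simp
    thus ?thesis by (simp add: cos_double_sin)
  qed
  have phi_small: "\<bar>\<phi>\<bar> < pi / 2"
  proof -
    have "\<bar>\<phi>\<bar> = pi * \<bar>\<alpha>\<bar> / real N" unfolding \<phi>_def using Npos by (simp add: abs_mult abs_divide)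
    also have "\<dots> < pi * (real N / 2) / real N" using aN' Npos by (intro divide_strict_right_mono mult_strict_left_mono) auto
    also have "\<dots> = pi / 2" using Npos by simp
    finally show ?thesis .
  qed
  have phi0: "\<phi> \<noteq> 0" unfolding \<phi>_def using a0 Npos by simp
  have sphi: "sin \<phi> \<noteq> 0"
  proof
    assume "sin \<phi> = 0"
    then obtain i :: int where i: "\<phi> = of_int i * pi" using sin_zero_iff_int2 by blast
    hence "\<bar>real_of_int i\<bar> * pi < pi / 2" using phi_small by (simp add: abs_mult)
    hence "\<bar>real_of_int i\<bar> < 1/2" by (simp add: field_simps)
    hence "i = 0" by linarith
    thus False using i phi0 by simp
  qed
  define s1 where "s1 = sin ((real L + 1) * \<phi>)^2"
  define s0 where "s0 = sin (real L * \<phi>)^2"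
  define q where "q = sin \<phi> ^ 2"
  have qpos: "q > 0" unfolding q_def using sphi by simp
  have qle: "q \<le> \<phi>^2" unfolding q_def
    using abs_sin_x_le_abs_x[of \<phi>] by (metis abs_ge_zero power2_le_iff_abs_le power2_abs)
  define Num where "Num = real bt * s1 + (real r - real bt) * s0"
  have Num0: "Num \<ge> 0" unfolding Num_def s1_def s0_def using btr by (intro add_nonneg_nonneg mult_nonneg_nonneg) auto
  have P2: "Pfun r m l \<alpha> = Num / (real N ^ 2 * q)"
    unfolding P c1 c0 c Num_def s1_def s0_def q_def using sphi Npos by (simp add: field_simps)
  have "Num / (real N ^ 2 * \<phi>^2) \<le> Num / (real N ^ 2 * q)"
    using Num0 qpos qle Npos by (intro divide_left_mono mult_left_mono mult_pos_pos) auto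
  moreover have "real N ^ 2 * \<phi>^2 = pi^2 * \<alpha>^2" unfolding \<phi>_def using Npos by (simp add: field_simps)
  ultimately have P3: "Pfun r m l \<alpha> \<ge> Num / (pi^2 * \<alpha>^2)" using P2 by simp
  define a where "a = pi * \<alpha> / real r"
  define d1 where "d1 = pi * (real r - real bt) * \<alpha> / (real r * real N)"
  define d0 where "d0 = pi * real bt * \<alpha> / (real r * real N)"
  have NL: "real N - real bt = real L * real r" using Neq by simp
  have "a + (- d0) = pi * \<alpha> * (real N - real bt) / (real r * real N)"
    unfolding a_def d0_def using rpos Npos by (simp add: field_simps)
  also have "\<dots> = pi * \<alpha> * (real L * real r) / (real r * real N)" by (simp only: NL)
  also have "\<dots> = real L * \<phi>" unfolding \<phi>_def using rpos Npos by (simp add: field_simps)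
  finally have e0: "real L * \<phi> = a + (- d0)" by simp
  have dd: "d1 + d0 = \<phi>"
    unfolding \<phi>_def d1_def d0_def using rpos Npos by (simp add: field_simps)
  have e1: "(real L + 1) * \<phi> = a + d1"
    using e0 dd by (simp add: algebra_simps)
  have dbound: "\<bar>pi * c * \<alpha> / (real r * real N)\<bar> \<le> 2" if "0 \<le> c" "c \<le> real r" for c
  proof -
    have "\<bar>pi * c * \<alpha> / (real r * real N)\<bar> = pi * (c / real r) * (\<bar>\<alpha>\<bar> / real N)"
      using that rpos Npos by (simp add: abs_mult abs_divide)
    also have "\<dots> \<le> pi * 1 * (1 / 2)"
      using that rpos Npos aN' by (intro mult_mono) (auto simp: field_simps)
    also have "\<dots> \<le> 2" using pi_less_4 by simp
    finally show ?thesis .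
  qed
  have d1b: "\<bar>d1\<bar> \<le> 2" unfolding d1_def using btr by (intro dbound) auto
  have d0b: "\<bar>- d0\<bar> \<le> 2" unfolding d0_def using btr dbound[of "real bt"] by simp
  have R1: "\<bar>s1 - sin a^2 - 2 * d1 * sin a * cos a\<bar> \<le> 3 * d1^2"
    unfolding s1_def e1 by (rule sin_sq_second_order[OF d1b])
  have R0: "\<bar>s0 - sin a^2 - 2 * (- d0) * sin a * cos a\<bar> \<le> 3 * (- d0)^2"
    unfolding s0_def e0 by (rule sin_sq_second_order[OF d0b])
  have cancel: "real bt * d1 = (real r - real bt) * d0" unfolding d1_def d0_def by (simp add: field_simps)
  have "Num - real r * sin a^2 = real bt * (s1 - sin a^2 - 2 * d1 * sin a * cos a)
      + (real r - real bt) * (s0 - sin a^2 - 2 * (- d0) * sin a * cos a)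
      + 2 * sin a * cos a * (real bt * d1 - (real r - real bt) * d0)"
    unfolding Num_def by (simp add: algebra_simps)
  also have "real bt * d1 - (real r - real bt) * d0 = 0" using cancel by simp
  finally have NumEq: "Num - real r * sin a^2 = real bt * (s1 - sin a^2 - 2 * d1 * sin a * cos a)
      + (real r - real bt) * (s0 - sin a^2 - 2 * (- d0) * sin a * cos a)" by simp
  have bt0: "0 \<le> real bt" and rbt: "0 \<le> real r - real bt" using btr by auto
  have X1: "- (3 * d1^2) \<le> s1 - sin a^2 - 2 * d1 * sin a * cos a" using R1 by (simp add: abs_le_iff)
  have X0: "- (3 * d0^2) \<le> s0 - sin a^2 - 2 * (- d0) * sin a * cos a" using R0 by (simp add: abs_le_iff)
  have "real bt * (- (3 * d1^2)) \<le> real bt * (s1 - sin a^2 - 2 * d1 * sin a * cos a)"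
    by (rule mult_left_mono[OF X1 bt0])
  moreover have "(real r - real bt) * (- (3 * d0^2)) \<le> (real r - real bt) * (s0 - sin a^2 - 2 * (- d0) * sin a * cos a)"
    by (rule mult_left_mono[OF X0 rbt])
  ultimately have Num1: "Num \<ge> real r * sin a^2 - 3 * (real bt * d1^2 + (real r - real bt) * d0^2)"
    using NumEq by (simp only: mult_minus_right ring_distribs)
  have Eeq: "real bt * d1^2 + (real r - real bt) * d0^2
       = (pi * \<alpha> / (real r * real N))^2 * (real bt * (real r - real bt) * real r)"
    unfolding d1_def d0_def using rpos Npos by (simp add: power2_eq_square field_simps)
  have "real bt * (real r - real bt) * real r \<le> real r * real r * real N"
  proof -
    have "real bt * (real r - real bt) \<le> real r * real r" using bt0 rbt btr
      by (intro mult_mono) auto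
    also have "\<dots> \<le> real r * real N" using rNr rpos by simp
    finally show ?thesis using rpos by (simp add: mult.commute mult_right_mono)
  qed
  hence "real bt * d1^2 + (real r - real bt) * d0^2 \<le> (pi * \<alpha> / (real r * real N))^2 * (real r * real r * real N)"
    unfolding Eeq by (intro mult_left_mono) auto
  also have "\<dots> = pi^2 * \<alpha>^2 / real N" using rpos Npos by (simp add: power2_eq_square field_simps)
  finally have Eb: "real bt * d1^2 + (real r - real bt) * d0^2 \<le> pi^2 * \<alpha>^2 / real N" .
  have "real r * sin a^2 - 3 * (pi^2 * \<alpha>^2 / real N) \<le> real r * sin a^2 - 3 * (real bt * d1^2 + (real r - real bt) * d0^2)"
    using Eb by simp
  hence Num2: "Num \<ge> real r * sin a^2 - 3 * (pi^2 * \<alpha>^2 / real N)" using Num1 by (rule order_trans)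
  have den: "pi^2 * \<alpha>^2 > 0" using a0 by simp
  have "real r * sin a^2 / (pi^2 * \<alpha>^2) - 3 / real N = (real r * sin a^2 - 3 * (pi^2 * \<alpha>^2 / real N)) / (pi^2 * \<alpha>^2)"
    using den Npos a0 by (simp add: diff_divide_distrib)
  also have "\<dots> \<le> Num / (pi^2 * \<alpha>^2)" using Num2 den by (intro divide_right_mono) auto
  also have "\<dots> \<le> Pfun r m l \<alpha>" by (rule P3)
  finally show ?thesis unfolding a_def N_def .
qed


lemma aux_lin: "(x::real) < (y - 1) / 2 \<Longrightarrow> 2 * x + 1 < y" by (simp add: field_simps)

lemma aux_frac:
  fixes R S y :: real assumes "R \<noteq> 0" "y \<noteq> 0"
  shows "R * S / (pi^2 * (R * y)^2) = S / (pi^2 * R) * (1 / y^2)"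
  using assms by (simp add: field_simps power2_eq_square)

lemma aux_alg:
  fixes S R bb :: real assumes "S \<noteq> 0" "R \<noteq> 0" "bb \<noteq> 0"
  shows "S / (pi^2 * R) * (pi^2 / S - 2 / bb) = 1 / R - S * (2 / (pi^2 * R * bb))"
  using assms by (simp add: field_simps)

lemma P_zero_ge:
  fixes r m l :: nat assumes r: "r \<ge> 1"
  shows "Pfun r m l 0 \<ge> 1 / real r"
proof -
  define N where "N = (2::nat)^(m+l)"
  define L where "L = N div r"
  define bt where "bt = N mod r"
  have Neq: "real N = real L * real r + real bt"
    unfolding L_def bt_def by (metis div_mult_mod_eq of_nat_add of_nat_mult)
  have btr: "real bt \<le> real r" unfolding bt_def using r by simp
  have Npos: "real N > 0" unfolding N_def by simp
  have rpos: "real r > 0" using r by simp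
  have P: "Pfun r m l 0 = (real L ^ 2 * real r + (2 * real L + 1) * real bt) / real N ^ 2"
    unfolding Pfun_def Let_def N_def[symmetric] L_def[symmetric] bt_def[symmetric] by simp
  have "real N ^ 2 \<le> (real L ^ 2 * real r + (2 * real L + 1) * real bt) * real r"
  proof -
    have "real bt * real bt \<le> real bt * real r" using btr by (intro mult_left_mono) auto
    thus ?thesis unfolding Neq by (simp add: power2_eq_square algebra_simps)
  qed
  hence "1 / real r \<le> (real L ^ 2 * real r + (2 * real L + 1) * real bt) / real N ^ 2"
    using Npos rpos by (simp add: field_simps)
  thus ?thesis using P by simp
qed

theorem theorem2:
  fixes r m l :: nat and \<alpha>0 :: real and B :: int
  assumes "r \<ge> 2" and "m \<ge> 1" and "l \<ge> 1" and "r < 2 ^ m"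
    and "- real r / 2 < \<alpha>0" and "\<alpha>0 \<le> real r / 2"
    and "1 \<le> B" and "real_of_int B < (2 ^ (m + l) / real r - 1) / 2"
  shows "(\<Sum>t = -B..B. Pfun r m l (\<alpha>0 + real r * real_of_int t))
    \<ge> 1 / real r * (1 - 1 / pi ^ 2 * (2 / real_of_int B + 1 / real_of_int B ^ 2
          + 1 / (3 * real_of_int B ^ 3)))
      - pi ^ 2 * (2 * real_of_int B + 1) / 2 ^ (m + l)"
proof -
  note asm = assms
  obtain b :: nat where Bb: "B = int b" using asm(7) by (metis nonneg_int_cases zero_le_one order_trans)
  have b1: "b \<ge> 1" using asm(7) Bb by simp
  define N where "N = (2::nat)^(m+l)"
  have NR: "(2::real) ^ (m + l) = real N" unfolding N_def by simp
  have Npos: "real N > 0" unfolding N_def by simp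
  have rpos: "real r > 0" using asm(1) by simp
  have "r < 2^(m+l)"
  proof -
    have "(2::nat)^m \<le> 2^(m+l)" by (intro power_increasing) auto
    thus ?thesis using asm(4) by linarith
  qed
  hence rN: "r \<le> 2^(m+l)" by simp
  have bN: "real r * real b < real N / 2 - real r / 2"
  proof -
    have "real b < (real N / real r - 1) / 2" using asm(8) Bb NR by simp
    hence "2 * real b + 1 < real N / real r" using aux_lin by blast
    hence "(2 * real b + 1) * real r < real N" using rpos by (simp add: field_simps)
    thus ?thesis by (simp add: algebra_simps)
  qed
  have range: "\<bar>\<alpha>0 + real r * real_of_int t\<bar> < real (2^(m+l)) / 2" if t: "t \<in> {- int b..int b}" for t
  proof -
    have "\<bar>real_of_int t\<bar> \<le> real b" using t by auto
    hence "\<bar>real r * real_of_int t\<bar> \<le> real r * real b" using rpos by (simp add: abs_mult)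
    moreover have "\<bar>\<alpha>0\<bar> \<le> real r / 2" using asm(5,6) by simp
    ultimately have "\<bar>\<alpha>0 + real r * real_of_int t\<bar> \<le> real r / 2 + real r * real b" by linarith
    thus ?thesis using bN unfolding N_def by simp
  qed
  define g where "g t = (if \<alpha>0 + real r * real_of_int t = 0 then 1 / real r
      else real r * sin (pi * (\<alpha>0 + real r * real_of_int t) / real r)^2 / (pi^2 * (\<alpha>0 + real r * real_of_int t)^2))" for t
  have per: "Pfun r m l (\<alpha>0 + real r * real_of_int t) \<ge> g t - 3 / real N" if t: "t \<in> {- int b..int b}" for t
  proof (cases "\<alpha>0 + real r * real_of_int t = 0")
    case True
    hence h1: "Pfun r m l (\<alpha>0 + real r * real_of_int t) \<ge> 1 / real r" using P_zero_ge[of r m l] asm(1) by simp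
    have h3: "3 / real N > 0" using Npos by simp
    have "g t = 1 / real r" unfolding g_def using True by simp
    thus ?thesis using h1 h3 by linarith
  next
    case False
    have "Pfun r m l (\<alpha>0 + real r * real_of_int t) \<ge> real r * sin (pi * (\<alpha>0 + real r * real_of_int t) / real r)^2 / (pi^2 * (\<alpha>0 + real r * real_of_int t)^2) - 3 / real ((2::nat)^(m+l))"
      using asm(1) rN False range[OF t] by (intro perterm) auto
    thus ?thesis using False unfolding g_def N_def by simp
  qed
  have "(\<Sum>t = -B..B. Pfun r m l (\<alpha>0 + real r * real_of_int t)) \<ge> (\<Sum>t = - int b..int b. g t - 3 / real N)"
    unfolding Bb by (intro sum_mono per) simp
  also have "(\<Sum>t = - int b..int b. g t - 3 / real N) = (\<Sum>t = - int b..int b. g t) - (2 * real b + 1) * (3 / real N)"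
  proof -
    have "card {- int b..int b} = 2 * b + 1" by simp
    thus ?thesis by (simp add: sum_subtractf)
  qed
  finally have S1: "(\<Sum>t = -B..B. Pfun r m l (\<alpha>0 + real r * real_of_int t)) \<ge> (\<Sum>t = - int b..int b. g t) - (2 * real b + 1) * (3 / real N)" .
  have G: "(\<Sum>t = - int b..int b. g t) \<ge> 1 / real r - 2 / (pi^2 * real r * real b)"
  proof (cases "\<alpha>0 = 0")
    case True
    have "(\<Sum>t = - int b..int b. g t) = (\<Sum>t = - int b..int b. if t = 0 then 1 / real r else 0)"
    proof (rule sum.cong[OF refl])
      fix t assume "t \<in> {- int b..int b}"
      show "g t = (if t = 0 then 1 / real r else 0)"
        unfolding g_def using True rpos by (auto simp: sin_zero_iff_int2)
    qed
    also have "\<dots> = 1 / real r" by simp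
    finally show ?thesis using rpos b1 by simp
  next
    case False
    define u where "u = \<alpha>0 / real r"
    have u1: "-1/2 < u" and u2: "u \<le> 1/2" unfolding u_def using asm(5,6) rpos by (auto simp: field_simps)
    have u0: "u \<noteq> 0" unfolding u_def using False rpos by simp
    have uI: "u \<notin> \<int>"
    proof
      assume "u \<in> \<int>" then obtain k where k: "u = of_int k" by (auto elim: Ints_cases)
      with u1 u2 have "-1 < 2 * k" "2 * k \<le> 1" by linarith+
      hence "k = 0" by linarith
      with k u0 show False by simp
    qed
    have su: "sin (pi * u) \<noteq> 0" using notInt_props(1)[OF uI] .
    have gt: "g t = sin (pi * u)^2 / (pi^2 * real r) * (1 / (u + real_of_int t)^2)" for t
    proof -
      have ar: "\<alpha>0 + real r * real_of_int t = real r * (u + real_of_int t)" unfolding u_def using rpos by (simp add: field_simps)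
      have ne: "u + real_of_int t \<noteq> 0"
      proof
        assume h: "u + real_of_int t = 0"
        hence "real_of_int t = - u" by simp
        with u1 u2 have "-1 \<le> 2 * t" "2 * t < 1" by linarith+
        hence "t = 0" by linarith
        thus False using h u0 by simp
      qed
      have "sin (pi * (u + real_of_int t))^2 = sin (pi * u)^2"
      proof -
        have s0: "sin (real_of_int t * pi) = 0" by (auto simp: sin_zero_iff_int2)
        hence c1: "cos (real_of_int t * pi)^2 = 1" using sin_cos_squared_add[of "real_of_int t * pi"] by simp
        have "sin (pi * (u + real_of_int t)) = sin (pi * u) * cos (real_of_int t * pi)"
          by (simp add: distrib_left sin_add s0 mult.commute)
        thus ?thesis using c1 by (simp add: power_mult_distrib)
      qed
      note sq = this
      have arg: "pi * (\<alpha>0 + real r * real_of_int t) / real r = pi * (u + real_of_int t)" unfolding ar using rpos by simp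
      have ne': "\<alpha>0 + real r * real_of_int t \<noteq> 0" unfolding ar using ne rpos by simp
      have "g t = real r * sin (pi * (\<alpha>0 + real r * real_of_int t) / real r)^2 / (pi^2 * (\<alpha>0 + real r * real_of_int t)^2)"
        unfolding g_def using ne' by simp
      also have "\<dots> = real r * sin (pi * u)^2 / (pi^2 * (real r * (u + real_of_int t))^2)"
        unfolding arg sq unfolding ar ..
      also have "\<dots> = sin (pi * u)^2 / (pi^2 * real r) * (1 / (u + real_of_int t)^2)"
        using rpos ne by (intro aux_frac) auto
      finally show ?thesis .
    qed
    have "(\<Sum>t = - int b..int b. g t) = sin (pi * u)^2 / (pi^2 * real r) * (\<Sum>t = - int b..int b. 1 / (u + real_of_int t)^2)"
      unfolding gt by (simp add: sum_distrib_left)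
    also have "\<dots> \<ge> sin (pi * u)^2 / (pi^2 * real r) * (pi^2 / sin (pi * u)^2 - 2 / real b)"
      using series_lower[OF u1 u2 u0 b1] rpos by (intro mult_left_mono) auto
    finally have "(\<Sum>t = - int b..int b. g t) \<ge> sin (pi * u)^2 / (pi^2 * real r) * (pi^2 / sin (pi * u)^2 - 2 / real b)" .
    also have "sin (pi * u)^2 / (pi^2 * real r) * (pi^2 / sin (pi * u)^2 - 2 / real b)
        = 1 / real r - sin (pi * u)^2 * (2 / (pi^2 * real r * real b))"
      using su rpos b1 by (intro aux_alg) auto
    finally have "(\<Sum>t = - int b..int b. g t) \<ge> 1 / real r - sin (pi * u)^2 * (2 / (pi^2 * real r * real b))" .
    moreover have "sin (pi * u)^2 * (2 / (pi^2 * real r * real b)) \<le> 1 * (2 / (pi^2 * real r * real b))"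
    proof (rule mult_right_mono)
      show "sin (pi * u)^2 \<le> 1" by (simp add: abs_square_le_1)
      show "0 \<le> 2 / (pi^2 * real r * real b)" using rpos by simp
    qed
    ultimately show ?thesis by simp
  qed
  have fin1: "1 / real r * (1 - 1 / pi ^ 2 * (2 / real b + 1 / real b ^ 2 + 1 / (3 * real b ^ 3)))
      \<le> 1 / real r - 2 / (pi^2 * real r * real b)"
  proof -
    have "0 \<le> 1 / real b ^ 2 + 1 / (3 * real b ^ 3)" by (intro add_nonneg_nonneg) auto
    hence "1 / pi ^ 2 * (2 / real b) \<le> 1 / pi ^ 2 * (2 / real b + 1 / real b ^ 2 + 1 / (3 * real b ^ 3))"
      by (intro mult_left_mono) auto
    hence "1 / real r * (1 - 1 / pi ^ 2 * (2 / real b + 1 / real b ^ 2 + 1 / (3 * real b ^ 3)))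
        \<le> 1 / real r * (1 - 1 / pi ^ 2 * (2 / real b))"
      using rpos by (intro mult_left_mono) auto
    also have "\<dots> = 1 / real r - 2 / (pi^2 * real r * real b)" using rpos b1 by (simp add: field_simps)
    finally show ?thesis .
  qed
  have fin2: "(2 * real b + 1) * (3 / real N) \<le> pi ^ 2 * (2 * real b + 1) / real N"
  proof -
    have "3 * 3 \<le> pi * pi" using pi_gt3 by (intro mult_mono) auto
    hence "3 \<le> pi^2" by (simp add: power2_eq_square)
    hence "(2 * real b + 1) * 3 \<le> (2 * real b + 1) * pi^2" by (intro mult_left_mono) auto
    hence "(2 * real b + 1) * 3 / real N \<le> (2 * real b + 1) * pi^2 / real N"
      using Npos by (intro divide_right_mono) auto
    thus ?thesis by (simp add: mult.commute)
  qed
  have fin: "1 / real r * (1 - 1 / pi ^ 2 * (2 / real b + 1 / real b ^ 2 + 1 / (3 * real b ^ 3)))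
      - pi ^ 2 * (2 * real b + 1) / real N
      \<le> (\<Sum>t = -B..B. Pfun r m l (\<alpha>0 + real r * real_of_int t))"
    using S1 G fin1 fin2 by linarith
  show ?thesis unfolding Bb NR of_int_of_nat_eq using fin unfolding Bb .
qed

end
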